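(* Let $P,Q,R_0,R_1$ be integers with $PQ\neq 0$, $\Delta:=P^2-4Q\neq 0$, $|R_0|+|R_1|>0$ and $\gcd(P,Q)=\gcd(R_1,Q)=1$, and let $(R_n)_{n\ge 0}$ be defined by $R_{n+2}=PR_{n+1}-QR_n$ for all $n\geq 0$. Assume $\alpha/\beta$ is not a root of unity, where $\alpha,\beta$ are the roots of $x^2-Px+Q$. Let $n$ and $k$ be positive integers with $n\geq k$. Then the integer $L_{k,n}:=\mathrm{lcm}(R_k,R_{k+1},\dots,R_n)$ is a multiple of the rational number \[\frac{R_kR_{k+1}\cdots R_n}{[n-k]_{\boldsymbol{U}}!\,\left(\gcd(R_0,R_1)\right)^{n-k}},\] i.e. $L_{k,n}$ divided by this rational number is an integer.
   Context: $\alpha,\beta$ are the two distinct roots of $x^2-Px+Q$, labelled so that $|\alpha|\ge|\beta|$. The Lucas sequence is $U_n=(\alpha^n-\beta^n)/(\alpha-\beta)$ ($n\ge 0$), equivalently $U_0=0,U_1=1,U_{n+2}=PU_{n+1}-QU_n$. For $j\ge 0$, $[j]_{\boldsymbol{U}}!:=U_1U_2\cdots U_j$ with $[0]_{\boldsymbol{U}}!=1$. *)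

theory Defs
  imports Complex_Main
begin

fun lrec :: "int \<Rightarrow> int \<Rightarrow> int \<Rightarrow> int \<Rightarrow> nat \<Rightarrow> int" where
  "lrec P Q R0 R1 0 = R0"
| "lrec P Q R0 R1 (Suc 0) = R1"
| "lrec P Q R0 R1 (Suc (Suc n)) = P * lrec P Q R0 R1 (Suc n) - Q * lrec P Q R0 R1 n"

definition lucasU :: "int \<Rightarrow> int \<Rightarrow> nat \<Rightarrow> int" where
  "lucasU P Q n = lrec P Q 0 1 n"

definition lucas_fact :: "int \<Rightarrow> int \<Rightarrow> nat \<Rightarrow> int" where
  "lucas_fact P Q j = (\<Prod>i = 1..j. lucasU P Q i)"

end

theory Submission
  imports Defs "HOL-Computational_Algebra.Primes"
begin

lemma lrec_SS: "lrec P Q a b (n + 2) = P * lrec P Q a b (n + 1) - Q * lrec P Q a b n"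
  by (simp add: numeral_2_eq_2)

lemma lrec_shift:
  "lrec P Q a b (i + d + 1) = lrec P Q a b (i + 1) * lucasU P Q (d + 1) - Q * lrec P Q a b i * lucasU P Q d
   \<and> lrec P Q a b (i + d + 2) = lrec P Q a b (i + 1) * lucasU P Q (d + 2) - Q * lrec P Q a b i * lucasU P Q (d + 1)"
proof (induction d)
  case 0
  then show ?case by (simp add: lucasU_def numeral_2_eq_2)
next
  case (Suc d)
  have e: "lrec P Q a b (i + Suc d + 2) = P * lrec P Q a b (i + d + 2) - Q * lrec P Q a b (i + d + 1)"
    using lrec_SS[of P Q a b "i + d + 1"] by (simp add: add.assoc)
  have u: "lucasU P Q (Suc d + 2) = P * lucasU P Q (d + 2) - Q * lucasU P Q (d + 1)"
    using lrec_SS[of P Q 0 1 "d + 1"] by (simp add: lucasU_def add.assoc)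
  have u': "lucasU P Q (d + 2) = P * lucasU P Q (d + 1) - Q * lucasU P Q d"
    using lrec_SS[of P Q 0 1 "d"] by (simp add: lucasU_def)
  have "lrec P Q a b (i + Suc d + 2) = P * (lrec P Q a b (i + 1) * lucasU P Q (d + 2) - Q * lrec P Q a b i * lucasU P Q (d + 1))
     - Q * (lrec P Q a b (i + 1) * lucasU P Q (d + 1) - Q * lrec P Q a b i * lucasU P Q d)"
  proof -
    from Suc.IH have I1: "lrec P Q a b (i + d + 1) = lrec P Q a b (i + 1) * lucasU P Q (d + 1) - Q * lrec P Q a b i * lucasU P Q d"
      and I2: "lrec P Q a b (i + d + 2) = lrec P Q a b (i + 1) * lucasU P Q (d + 2) - Q * lrec P Q a b i * lucasU P Q (d + 1)" by blast+
    show ?thesis unfolding e I1 I2 by (rule refl)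
  qed
  also have "\<dots> = lrec P Q a b (i + 1) * (P * lucasU P Q (d + 2) - Q * lucasU P Q (d + 1))
     - Q * lrec P Q a b i * (P * lucasU P Q (d + 1) - Q * lucasU P Q d)"
    by (simp add: algebra_simps)
  also have "\<dots> = lrec P Q a b (i + 1) * lucasU P Q (Suc d + 2) - Q * lrec P Q a b i * lucasU P Q (Suc d + 1)"
    using u u' by simp
  finally have c2: "lrec P Q a b (i + Suc d + 2) = lrec P Q a b (i + 1) * lucasU P Q (Suc d + 2) - Q * lrec P Q a b i * lucasU P Q (Suc d + 1)" .
  have c1: "lrec P Q a b (i + Suc d + 1) = lrec P Q a b (i + 1) * lucasU P Q (Suc d + 1) - Q * lrec P Q a b i * lucasU P Q (Suc d)"
  proof -
    have "lrec P Q a b (i + d + 2) = lrec P Q a b (i + 1) * lucasU P Q (d + 2) - Q * lrec P Q a b i * lucasU P Q (d + 1)"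
      using Suc.IH by blast
    moreover have "i + Suc d + 1 = i + d + 2" "Suc d + 1 = d + 2" "Suc d = d + 1" by simp_all
    ultimately show ?thesis by (simp only:)
  qed
  show ?case using c1 c2 by blast
qed

lemma lrec_scale2: "lrec P Q (g * a) (g * b) n = g * lrec P Q a b n \<and> lrec P Q (g * a) (g * b) (Suc n) = g * lrec P Q a b (Suc n)"
proof (induction n)
  case 0
  then show ?case by simp
next
  case (Suc n)
  then show ?case by (simp add: right_diff_distrib mult.left_commute)
qed

lemma lrec_scale: "lrec P Q (g * a) (g * b) n = g * lrec P Q a b n"
  using lrec_scale2 by blast

lemma lrec_Q_coprime:
  assumes "prime (p::int)" "p dvd Q" "gcd P Q = 1" "gcd b Q = 1"
  shows "\<not> p dvd lrec P Q a b (Suc n)"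
proof (induction n rule: less_induct)
  case (less n)
  show ?case
  proof (cases n)
    case 0
    show ?thesis
    proof
      assume "p dvd lrec P Q a b (Suc n)"
      then have "p dvd b" using 0 by simp
      then have "p dvd gcd b Q" using assms(2) by simp
      then have "is_unit p" using assms(4) by simp
      then show False using assms(1) not_prime_unit by blast
    qed
  next
    case (Suc n')
    have e: "lrec P Q a b (Suc n) = P * lrec P Q a b (Suc n') - Q * lrec P Q a b n'"
      using Suc by simp
    have "\<not> p dvd P"
    proof
      assume "p dvd P"
      then have "p dvd gcd P Q" using assms(2) by simp
      then have "is_unit p" using assms(3) by simp
      then show False using assms(1) not_prime_unit by blast
    qed
    moreover have "\<not> p dvd lrec P Q a b (Suc n')" using less Suc by simp
    ultimately have "\<not> p dvd P * lrec P Q a b (Suc n')"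
      using assms(1) prime_dvd_mult_iff by blast
    show ?thesis
    proof
      assume "p dvd lrec P Q a b (Suc n)"
      moreover have "p dvd Q * lrec P Q a b n'" using assms(2) by simp
      ultimately have "p dvd lrec P Q a b (Suc n) + Q * lrec P Q a b n'" by (rule dvd_add)
      then show False using e \<open>\<not> p dvd P * lrec P Q a b (Suc n')\<close> by simp
    qed
  qed
qed

lemma lrec_consec:
  assumes "prime (p::int)" "\<not> p dvd Q" "gcd a b = 1"
    "p dvd lrec P Q a b i" "p dvd lrec P Q a b (Suc i)"
  shows False
  using assms(4,5)
proof (induction i)
  case 0
  then have "p dvd gcd a b" by simp
  then have "is_unit p" using assms(3) by simp
  then show ?case using assms(1) not_prime_unit by blast
next
  case (Suc i)
  have e: "Q * lrec P Q a b i = P * lrec P Q a b (Suc i) - lrec P Q a b (Suc (Suc i))"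
    by (simp only: lrec.simps)
  have "p dvd P * lrec P Q a b (Suc i) - lrec P Q a b (Suc (Suc i))"
    using Suc.prems by (intro dvd_diff) simp_all
  then have "p dvd Q * lrec P Q a b i" by (subst e)
  then have "p dvd lrec P Q a b i" using assms(1,2) prime_dvd_mult_iff by blast
  then show ?case using Suc by blast
qed

lemma key_dvd:
  assumes p: "prime (p::int)" and e: "e \<ge> 1"
    and ab: "gcd a b = 1" and PQ: "gcd P Q = 1" and bQ: "gcd b Q = 1"
    and i: "i > 0" and ij: "i < j"
    and di: "p ^ e dvd lrec P Q a b i" and dj: "p ^ e dvd lrec P Q a b j"
  shows "p ^ e dvd lucasU P Q (j - i)"
proof -
  have pi: "p dvd lrec P Q a b i" 
  proof -
    have "p dvd p ^ e" using e by (cases e) auto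
    then show ?thesis using di by (rule dvd_trans)
  qed
  have nQ: "\<not> p dvd Q"
  proof
    assume "p dvd Q"
    from lrec_Q_coprime[OF p this PQ bQ, of a "i - 1"] i pi show False by simp
  qed
  define d where "d = j - i - 1"
  have jd: "j = i + d + 1" using ij unfolding d_def by simp
  have sh: "lrec P Q a b j = lrec P Q a b (i + 1) * lucasU P Q (d + 1) - Q * lrec P Q a b i * lucasU P Q d"
    using lrec_shift[of P Q a b i d] jd by blast
  have "p ^ e dvd lrec P Q a b j + Q * lrec P Q a b i * lucasU P Q d"
    using dj di by (intro dvd_add) auto
  then have h1: "p ^ e dvd lrec P Q a b (i + 1) * lucasU P Q (d + 1)" using sh by simp
  have "\<not> p dvd lrec P Q a b (Suc i)"
    using lrec_consec[OF p nQ ab pi] by blast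
  then have "\<not> p dvd lrec P Q a b (i + 1)" by simp
  then have "coprime p (lrec P Q a b (i + 1))"
    using p by (simp add: prime_imp_coprime)
  then have "coprime (p ^ e) (lrec P Q a b (i + 1))"
    by simp
  then have "p ^ e dvd lucasU P Q (d + 1)"
    using h1 coprime_dvd_mult_right_iff by blast
  then show ?thesis using jd by simp
qed

lemma count_le:
  assumes p: "prime (p::int)" and e: "e \<ge> 1"
    and ab: "gcd a b = 1" and PQ: "gcd P Q = 1" and bQ: "gcd b Q = 1"
    and k: "k > 0"
  shows "card {i \<in> {k..n}. p ^ e dvd lrec P Q a b i} \<le> card {d \<in> {1..n-k}. p ^ e dvd lucasU P Q d} + 1"
proof (cases "{i \<in> {k..n}. p ^ e dvd lrec P Q a b i} = {}")
  case True
  then show ?thesis by (simp only:) simp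
next
  case False
  define S where "S = {i \<in> {k..n}. p ^ e dvd lrec P Q a b i}"
  define T where "T = {d \<in> {1..n-k}. p ^ e dvd lucasU P Q d}"
  have fS: "finite S" unfolding S_def by simp
  define i0 where "i0 = Min S"
  have i0S: "i0 \<in> S" using False fS unfolding i0_def S_def by (intro Min_in) auto
  have i0le: "\<And>i. i \<in> S \<Longrightarrow> i0 \<le> i" using fS unfolding i0_def by simp
  have inj: "inj_on (\<lambda>i. i - i0) (S - {i0})"
  proof (rule inj_onI)
    fix x y assume "x \<in> S - {i0}" "y \<in> S - {i0}" "x - i0 = y - i0"
    moreover have "i0 \<le> x" "i0 \<le> y" using i0le calculation by auto
    ultimately show "x = y" by simp
  qed
  have sub: "(\<lambda>i. i - i0) ` (S - {i0}) \<subseteq> T"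
  proof
    fix x assume "x \<in> (\<lambda>i. i - i0) ` (S - {i0})"
    then obtain i where iS: "i \<in> S" "i \<noteq> i0" and x: "x = i - i0" by auto
    have lt: "i0 < i" using i0le[OF iS(1)] iS(2) by simp
    have "i0 \<ge> k" "i \<le> n" using i0S iS unfolding S_def by auto
    moreover have "p ^ e dvd lucasU P Q (i - i0)"
      using key_dvd[OF p e ab PQ bQ _ lt] i0S iS k unfolding S_def by auto
    ultimately show "x \<in> T" unfolding T_def x using lt by auto
  qed
  have "card (S - {i0}) \<le> card T"
    using card_inj_on_le[OF inj sub] unfolding T_def by simp
  moreover have "card S = card (S - {i0}) + 1"
    using card.remove[OF fS i0S] by simp
  ultimately show ?thesis unfolding S_def T_def by simp
qed

lemma mult_as_sum:
  assumes p: "prime (p::int)" and x: "x \<noteq> 0" and M: "multiplicity p x \<le> M"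
  shows "multiplicity p x = (\<Sum>e=1..M. if p ^ e dvd x then 1 else 0)"
proof -
  have nu: "\<not> is_unit p" using p not_prime_unit by blast
  have "{e \<in> {1..M}. p ^ e dvd x} = {1..multiplicity p x}"
    using M by (auto simp: power_dvd_iff_le_multiplicity[OF x nu])
  then have "card {e \<in> {1..M}. p ^ e dvd x} = multiplicity p x" by simp
  moreover have "card {e \<in> {1..M}. p ^ e dvd x} = (\<Sum>e=1..M. if p ^ e dvd x then 1 else 0)"
    by (simp add: sum.inter_filter[symmetric])
  ultimately show ?thesis by simp
qed

lemma mult_ge_sum:
  assumes p: "prime (p::int)" and x: "x \<noteq> 0"
  shows "(\<Sum>e=1..M. if p ^ e dvd x then 1 else 0) \<le> multiplicity p x"
proof -
  have nu: "\<not> is_unit p" using p not_prime_unit by blast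
  have sub: "{e \<in> {1..M}. p ^ e dvd x} \<subseteq> {1..multiplicity p x}"
    by (auto simp: power_dvd_iff_le_multiplicity[OF x nu])
  then have "card {e \<in> {1..M}. p ^ e dvd x} \<le> multiplicity p x"
    using card_mono[OF finite_atLeastAtMost sub] by simp
  moreover have "card {e \<in> {1..M}. p ^ e dvd x} = (\<Sum>e=1..M. if p ^ e dvd x then 1 else 0)"
    by (simp add: sum.inter_filter[symmetric])
  ultimately show ?thesis by simp
qed

lemma main_dvd:
  assumes ab: "gcd a b = 1" and PQ: "gcd P Q = 1" and bQ: "gcd b Q = 1"
    and k: "k > 0"
    and Rnz: "\<And>i. i \<in> {k..n} \<Longrightarrow> lrec P Q a b i \<noteq> 0"
    and Unz: "\<And>d. d \<in> {1..n-k} \<Longrightarrow> lucasU P Q d \<noteq> 0"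
    and kn: "k \<le> n"
  shows "(\<Prod>i = k..n. lrec P Q a b i) dvd lucas_fact P Q (n - k) * Lcm (lrec P Q a b ` {k..n})"
proof (rule multiplicity_le_imp_dvd)
  let ?R = "lrec P Q a b" and ?U = "lucasU P Q"
  show "(\<Prod>i = k..n. ?R i) \<noteq> 0" using Rnz by simp
  fix p :: int assume p: "prime p"
  have pe: "prime_elem p" using p by (rule prime_imp_prime_elem)
  define M where "M = Max ((\<lambda>i. multiplicity p (?R i)) ` {k..n})"
  have "M \<in> (\<lambda>i. multiplicity p (?R i)) ` {k..n}"
    unfolding M_def using kn by (intro Max_in) auto
  then obtain istar where ist: "istar \<in> {k..n}" and Mi: "M = multiplicity p (?R istar)"
    by blast
  have Mge: "\<And>i. i \<in> {k..n} \<Longrightarrow> multiplicity p (?R i) \<le> M"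
    unfolding M_def by (intro Max_ge) auto
  have Lnz: "Lcm (?R ` {k..n}) \<noteq> 0"
    using Rnz by (subst Lcm_0_iff) auto
  have Fnz: "lucas_fact P Q (n - k) \<noteq> 0"
    using Unz unfolding lucas_fact_def by simp
  have "multiplicity p (\<Prod>i = k..n. ?R i) = (\<Sum>i = k..n. multiplicity p (?R i))"
    using Rnz by (intro prime_elem_multiplicity_prod_distrib pe) auto
  also have "\<dots> = (\<Sum>i = k..n. \<Sum>e=1..M. if p ^ e dvd ?R i then 1 else 0)"
    using Rnz Mge by (intro sum.cong refl mult_as_sum p) auto
  also have "\<dots> = (\<Sum>e=1..M. \<Sum>i = k..n. if p ^ e dvd ?R i then 1 else 0)"
    by (rule sum.swap)
  also have "\<dots> = (\<Sum>e=1..M. card {i \<in> {k..n}. p ^ e dvd ?R i})"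
    by (simp add: sum.inter_filter[symmetric])
  also have "\<dots> \<le> (\<Sum>e=1..M. card {d \<in> {1..n-k}. p ^ e dvd ?U d} + 1)"
    using count_le[OF p _ ab PQ bQ k] by (intro sum_mono) auto
  also have "\<dots> = (\<Sum>e=1..M. card {d \<in> {1..n-k}. p ^ e dvd ?U d}) + M"
    unfolding sum.distrib by simp
  finally have A: "multiplicity p (\<Prod>i = k..n. ?R i) \<le> (\<Sum>e=1..M. card {d \<in> {1..n-k}. p ^ e dvd ?U d}) + M" .
  have "(\<Sum>e=1..M. card {d \<in> {1..n-k}. p ^ e dvd ?U d}) = (\<Sum>e=1..M. \<Sum>d=1..n-k. if p ^ e dvd ?U d then 1 else 0)"
    by (simp add: sum.inter_filter[symmetric])
  also have "\<dots> = (\<Sum>d=1..n-k. \<Sum>e=1..M. if p ^ e dvd ?U d then 1 else 0)"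
    by (rule sum.swap)
  also have "\<dots> \<le> (\<Sum>d=1..n-k. multiplicity p (?U d))"
    using Unz by (intro sum_mono mult_ge_sum p) auto
  also have "\<dots> = multiplicity p (lucas_fact P Q (n - k))"
    unfolding lucas_fact_def using Unz by (intro prime_elem_multiplicity_prod_distrib[symmetric] pe) auto
  finally have B: "(\<Sum>e=1..M. card {d \<in> {1..n-k}. p ^ e dvd ?U d}) \<le> multiplicity p (lucas_fact P Q (n - k))" .
  have C: "M \<le> multiplicity p (Lcm (?R ` {k..n}))"
    unfolding Mi using ist Lnz by (intro dvd_imp_multiplicity_le) auto
  show "multiplicity p (\<Prod>i = k..n. ?R i) \<le> multiplicity p (lucas_fact P Q (n - k) * Lcm (?R ` {k..n}))"
    using prime_elem_multiplicity_mult_distrib[OF pe Fnz Lnz] A B C by linarith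
qed

lemma rat_quot:
  fixes L pr D :: int
  assumes "pr dvd L * D"
  shows "(of_int L :: rat) / (of_int pr / of_int D) \<in> \<int>"
proof (cases "pr = 0 \<or> D = 0")
  case True
  then show ?thesis by auto
next
  case False
  obtain t where t: "L * D = pr * t" using assms by blast
  have "(of_int L :: rat) / (of_int pr / of_int D) = of_int (L * D) / of_int pr"
    using False by (simp add: field_simps)
  also have "\<dots> = of_int t" using t False by simp
  finally show ?thesis by simp
qed

theorem theorem1:
  fixes P Q R0 R1 :: int and \<alpha> \<beta> :: complex and n k :: nat
  assumes "P * Q \<noteq> 0"
    and "P^2 - 4 * Q \<noteq> 0"
    and "\<bar>R0\<bar> + \<bar>R1\<bar> > 0"
    and "gcd P Q = 1" and "gcd R1 Q = 1"
    and "\<alpha> + \<beta> = of_int P" and "\<alpha> * \<beta> = of_int Q"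
    and "\<forall>m::nat. m > 0 \<longrightarrow> (\<alpha> / \<beta>) ^ m \<noteq> 1"
    and "k > 0" and "n \<ge> k"
  shows "(of_int (Lcm (lrec P Q R0 R1 ` {k..n})) :: rat)
           / (of_int (\<Prod>i = k..n. lrec P Q R0 R1 i)
              / (of_int (lucas_fact P Q (n - k)) * of_int (gcd R0 R1) ^ (n - k)))
         \<in> \<int>"
proof -
  define g where "g = gcd R0 R1"
  define a where "a = R0 div g"
  define b where "b = R1 div g"
  define m where "m = n - k"
  let ?R = "lrec P Q R0 R1" and ?S = "lrec P Q a b"
  define F where "F = lucas_fact P Q m"
  define L where "L = Lcm (?R ` {k..n})"
  have "g \<noteq> 0" using assms(3) unfolding g_def by auto
  then have gpos: "g > 0" unfolding g_def using gcd_ge_0_int[of R0 R1] by linarith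
  have R0: "R0 = g * a" and R1: "R1 = g * b" unfolding a_def b_def g_def by simp_all
  have "coprime a b" unfolding a_def b_def g_def
    by (rule div_gcd_coprime) (use gpos g_def in auto)
  then have ab: "gcd a b = 1" by simp
  have bQ: "gcd b Q = 1"
  proof -
    have "gcd b Q dvd gcd R1 Q" unfolding R1 by (simp add: gcd_mono dvd_triv_right)
    then show ?thesis using assms(5) by simp
  qed
  have RS: "\<And>i. ?R i = g * ?S i" unfolding R0 R1 by (rule lrec_scale)
  have "(\<Prod>i = k..n. ?R i) dvd L * (F * g ^ m)"
  proof (cases "(\<exists>i\<in>{k..n}. ?S i = 0) \<or> (\<exists>d\<in>{1..m}. lucasU P Q d = 0)")
    case True
    then have "(\<Prod>i = k..n. ?R i) = 0 \<or> F = 0"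
      unfolding F_def lucas_fact_def using RS by auto
    then show ?thesis
    proof
      assume "F = 0" then show ?thesis by simp
    next
      assume "(\<Prod>i = k..n. ?R i) = 0"
      then obtain i where "i \<in> {k..n}" "?R i = 0" by auto
      then have "L = 0" unfolding L_def by (subst Lcm_0_iff) force+
      then show ?thesis by simp
    qed
  next
    case False
    have mS: "(\<Prod>i = k..n. ?S i) dvd F * Lcm (?S ` {k..n})"
      unfolding F_def m_def using main_dvd[OF ab assms(4) bQ assms(9) _ _ assms(10)] False m_def by auto
    have "?R k dvd L" unfolding L_def using assms(10) by (intro dvd_Lcm) auto
    then have gL: "g dvd L" unfolding RS by (rule dvd_mult_left)
    then obtain c where c: "L = g * c" by blast
    have "Lcm (?S ` {k..n}) dvd c"
    proof (rule Lcm_least)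
      fix x assume "x \<in> ?S ` {k..n}"
      then obtain i where i: "i \<in> {k..n}" "x = ?S i" by auto
      have "?R i dvd L" unfolding L_def using i by (intro dvd_Lcm) auto
      then have "g * ?S i dvd g * c" using c unfolding RS by simp
      then show "x dvd c" using i gpos by simp
    qed
    have card: "card {k..n} = m + 1" unfolding m_def using assms(10) by simp
    have "(\<Prod>i = k..n. ?R i) = g ^ (m + 1) * (\<Prod>i = k..n. ?S i)"
      unfolding RS prod.distrib using card by simp
    also have "\<dots> dvd g ^ (m + 1) * (F * Lcm (?S ` {k..n}))"
      using mS by (rule mult_dvd_mono[OF dvd_refl])
    also have "\<dots> dvd g ^ (m + 1) * (F * c)"
      using \<open>Lcm (?S ` {k..n}) dvd c\<close> by (intro mult_dvd_mono dvd_refl)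
    also have "\<dots> = L * (F * g ^ m)" unfolding c by (simp add: algebra_simps)
    finally show ?thesis .
  qed
  then have "(of_int L :: rat) / (of_int (\<Prod>i = k..n. ?R i) / of_int (F * g ^ m)) \<in> \<int>"
    by (rule rat_quot)
  then show ?thesis unfolding L_def F_def m_def g_def by simp
qed

end
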